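(* Let $a>0$, $C>0$, $a'\in\mathbb{R}$, $b=2a'C^2$, $\omega=a^2/4$, $\alpha=a+b/2$, $\beta=b/2$, let $k_\pm(\lambda)=\sqrt{-\omega\mp i\lambda}$ be the branches analytic on $\mathbb{C}\setminus\mathcal{C}_\pm$ with $\operatorname{Im}k_\pm>0$ there, where $\mathcal{C}_+=[i\omega,i\infty)$, $\mathcal{C}_-=(-i\infty,-i\omega]$, and let $$ D(\lambda)=\alpha^2+2i\alpha(k_++k_-)-4k_+k_--\beta^2. $$ Let $\gamma_2=a'C^2$ and $\lambda_2=i\frac{\gamma_2}{2}\sqrt{4\omega-\gamma_2^2}$. Then: (i) if $a'\in(-\infty,a/(\sqrt2C^2))$, the only zero of $D$ is $\lambda=0$, with multiplicity $2$; (ii) if $a'\in[a/(\sqrt2C^2),a/C^2)$, the zeros of $D$ are $\lambda=0$ (multiplicity two) and the two purely imaginary numbers $\pm i|\lambda_2|$; (iii) if $a'=a/C^2$, the only zero of $D$ is $\lambda=0$, with multiplicity $4$; (iv) if $a'\in(a/C^2,+\infty)$, the zeros of $D$ are $\lambda=0$ (multiplicity two) and the two real numbers $\pm|\lambda_2|$; in particular there is a positive zero.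
   Context: Here $a=a(C^2)$, $a'=a'(C^2)$ for the nonlinearity $F(\psi)=a(|\psi|^2)\psi$; $D(\lambda)$ is the determinant whose zeros in $\mathbb{C}\setminus(\mathcal{C}_+\cup\mathcal{C}_-)$ are the poles of the resolvent of the linearization at the solitary wave $Ce^{-\sqrt\omega|x|}$. *)

theory Defs
  imports "HOL-Complex_Analysis.Complex_Analysis"
begin

definition omg :: "real \<Rightarrow> real" where
  "omg a = a\<^sup>2 / 4"

text \<open>k_+(z) = sqrt(-omega - i z), the branch analytic off C_+ = [i omega, i infinity)
  with positive imaginary part there: k_+(z) = i * csqrt(omega + i z)
  (csqrt = principal root, Re > 0 off the negative real axis).\<close>
definition kplus :: "real \<Rightarrow> complex \<Rightarrow> complex" where
  "kplus w z = \<i> * csqrt (complex_of_real w + \<i> * z)"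

definition kminus :: "real \<Rightarrow> complex \<Rightarrow> complex" where
  "kminus w z = \<i> * csqrt (complex_of_real w - \<i> * z)"

definition Cplus :: "real \<Rightarrow> complex set" where
  "Cplus w = {\<i> * complex_of_real t | t. t \<ge> w}"

definition Cminus :: "real \<Rightarrow> complex set" where
  "Cminus w = {\<i> * complex_of_real t | t. t \<le> - w}"

definition Ddet :: "real \<Rightarrow> real \<Rightarrow> real \<Rightarrow> complex \<Rightarrow> complex" where
  "Ddet a a' C z =
     (let w = omg a; b = 2 * a' * C\<^sup>2; \<alpha> = a + b / 2; \<beta> = b / 2;
          kp = kplus w z; km = kminus w z
      in complex_of_real (\<alpha>\<^sup>2) + 2 * \<i> * complex_of_real \<alpha> * (kp + km)
         - 4 * kp * km - complex_of_real (\<beta>\<^sup>2))"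

text \<open>Region where D is considered: complement of the cuts, together with the two
  branch points +-i omega (where k_+ resp. k_- equals 0 unambiguously).\<close>
definition Dregion :: "real \<Rightarrow> complex set" where
  "Dregion a = (UNIV - (Cplus (omg a) \<union> Cminus (omg a)))
                \<union> {\<i> * complex_of_real (omg a), - \<i> * complex_of_real (omg a)}"

definition Dzeros :: "real \<Rightarrow> real \<Rightarrow> real \<Rightarrow> complex set" where
  "Dzeros a a' C = {z \<in> Dregion a. Ddet a a' C z = 0}"

definition lambda2 :: "real \<Rightarrow> real \<Rightarrow> real \<Rightarrow> complex" where
  "lambda2 a a' C = (let g = a' * C\<^sup>2 in
     \<i> * complex_of_real (g / 2) * csqrt (complex_of_real (4 * omg a - g\<^sup>2)))"

end

theory Submission
  imports Defs
begin


lemma Dform: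
  "Ddet a a' C z = 2 * (csqrt (of_real (a\<^sup>2/4) + \<i>*z) + csqrt (of_real (a\<^sup>2/4) - \<i>*z) - of_real a)
     * (csqrt (of_real (a\<^sup>2/4) + \<i>*z) + csqrt (of_real (a\<^sup>2/4) - \<i>*z) - of_real (a' * C\<^sup>2))"
proof -
  define p where "p = csqrt (of_real (a\<^sup>2/4) + \<i>*z)"
  define q where "q = csqrt (of_real (a\<^sup>2/4) - \<i>*z)"
  have hp: "p^2 = of_real (a\<^sup>2/4) + \<i>*z" unfolding p_def by simp
  have hq: "q^2 = of_real (a\<^sup>2/4) - \<i>*z" unfolding q_def by simp
  have "Ddet a a' C z = of_real ((a + a'*C\<^sup>2)\<^sup>2) + 2*\<i>* of_real (a + a'*C\<^sup>2) * (\<i>*p + \<i>*q)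
       - 4*(\<i>*p)*(\<i>*q) - of_real ((a'*C\<^sup>2)\<^sup>2)"
    unfolding Ddet_def kplus_def kminus_def omg_def Let_def p_def q_def by simp
  also have "\<dots> = 2 * (p+q-of_real a)*(p+q-of_real (a'*C\<^sup>2)) + 2*(of_real (a\<^sup>2/4) - p^2) + 2*(of_real (a\<^sup>2/4) - q^2)"
    by (simp add: algebra_simps power2_eq_square)
  also have "\<dots> = 2 * (p+q-of_real a)*(p+q-of_real (a'*C\<^sup>2))" using hp hq by simp
  finally show ?thesis unfolding p_def q_def by simp
qed



lemma sq_eq_cases: "(d::complex)^2 = e^2 \<Longrightarrow> d = e \<or> d = -e"
  by (metis power2_eq_iff)

lemma core_zero:
  fixes a g :: real and z :: complex
  assumes a: "a > 0"
  defines "p \<equiv> csqrt (of_real (a\<^sup>2/4) + \<i>*z)" and "q \<equiv> csqrt (of_real (a\<^sup>2/4) - \<i>*z)"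
  shows "(p+q-of_real a)*(p+q-of_real g) = 0 \<longleftrightarrow>
     z = 0 \<or> (0 < g \<and> g < a \<and> a\<^sup>2 \<le> 2*g\<^sup>2 \<and> (z = \<i> * of_real (g * sqrt(a\<^sup>2-g\<^sup>2)/2) \<or> z = - \<i> * of_real (g * sqrt(a\<^sup>2-g\<^sup>2)/2)))
     \<or> (a < g \<and> (z = of_real (g * sqrt(g\<^sup>2-a\<^sup>2)/2) \<or> z = - of_real (g * sqrt(g\<^sup>2-a\<^sup>2)/2)))"
    (is "?L \<longleftrightarrow> ?R")
proof
  have hp: "p^2 = of_real (a\<^sup>2/4) + \<i>*z" unfolding p_def by simp
  have hq: "q^2 = of_real (a\<^sup>2/4) - \<i>*z" unfolding q_def by simp
  have rp: "Re p \<ge> 0" "Re q \<ge> 0" unfolding p_def q_def by (rule Re_csqrt)+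
  assume ?L
  then have "p + q = of_real a \<or> p + q = of_real g" by simp
  then show ?R
  proof
    assume s: "p + q = of_real a"
    have "(p-q)^2 = 2*(p^2+q^2) - (p+q)^2" by (simp add: power2_eq_square algebra_simps)
    also have "\<dots> = 0" using hp hq s by (simp add: power2_eq_square algebra_simps)
    finally have "p = q" by simp
    then have "p^2 = q^2" by simp
    then have "z = 0" using hp hq by simp
    then show ?R by simp
  next
    assume s: "p + q = of_real g"
    define d where "d = p - q"
    have d2: "d^2 = of_real (a\<^sup>2 - g\<^sup>2)"
    proof -
      have "d^2 = 2*(p^2+q^2) - (p+q)^2" unfolding d_def by (simp add: power2_eq_square algebra_simps)
      also have "\<dots> = 2*(of_real (a\<^sup>2/4) + \<i>*z + (of_real (a\<^sup>2/4) - \<i>*z)) - (of_real g)^2" using hp hq s by simp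
      also have "\<dots> = of_real (a\<^sup>2 - g\<^sup>2)" by (simp add: field_simps)
      finally show ?thesis .
    qed
    have "2*\<i>*z = p^2 - q^2" using hp hq by simp
    also have "\<dots> = (p+q)*d" unfolding d_def by (simp add: power2_eq_square algebra_simps)
    finally have e: "2*\<i>*z = of_real g * d" using s by simp
    have "z = - \<i> * (2*\<i>*z) / 2" by (simp add: field_simps)
    then have zd: "z = - \<i> * of_real g * d / 2" using e by simp
    have pd: "Re p = (g + Re d)/2" "Re q = (g - Re d)/2"
      using arg_cong[OF s, of Re] unfolding d_def by auto
    consider "g < a" | "g = a" | "a < g" by linarith
    then show ?R
    proof cases
      case 1
      define r where "r = sqrt (a\<^sup>2 - g\<^sup>2)"
      have g0: "g \<ge> 0" using rp pd by (simp add: field_simps)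
      have "g^2 < a^2" using g0 1 by (simp add: power_strict_mono)
      then have ag: "a\<^sup>2 - g\<^sup>2 > 0" by simp
      have rpos: "r > 0" unfolding r_def using ag by simp
      have rr: "r^2 = a\<^sup>2 - g\<^sup>2" unfolding r_def using ag by simp
      have "d^2 = (of_real r)^2" using d2 rr by (metis of_real_power)
      then have dd: "d = of_real r \<or> d = - of_real r" by (rule sq_eq_cases)
      then have "Re d = r \<or> Re d = -r" by auto
      then have gr: "g \<ge> r" using rp pd by auto
      have "g^2 \<ge> r^2" using gr rpos by (simp add: power_mono)
      then have "a\<^sup>2 \<le> 2*g\<^sup>2" using rr by simp
      moreover have "z = \<i> * of_real (g * r/2) \<or> z = - \<i> * of_real (g * r/2)"
        using dd zd by auto
      moreover have "g > 0" using gr rpos by linarith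
      ultimately show ?R using 1 unfolding r_def by blast
    next
      case 2
      then have "d = 0" using d2 by simp
      then show ?R using zd by simp
    next
      case 3
      define h where "h = sqrt (g\<^sup>2 - a\<^sup>2)"
      have "a^2 < g^2" using a 3 by (simp add: power_strict_mono)
    then have hh: "h^2 = g\<^sup>2 - a\<^sup>2" unfolding h_def by simp
      have "d^2 = (\<i> * of_real h)^2" using d2 hh
        by (simp add: power_mult_distrib flip: of_real_power)
      then have dd: "d = \<i> * of_real h \<or> d = - (\<i> * of_real h)" by (rule sq_eq_cases)
      have "z = of_real (g * h/2) \<or> z = - of_real (g * h/2)"
        using dd zd by (auto simp: algebra_simps)
      then show ?R using 3 unfolding h_def by auto
    qed
  qed
next
  assume ?R
  then consider "z = 0" | "0 < g" "g < a" "a\<^sup>2 \<le> 2*g\<^sup>2" "z = \<i> * of_real (g * sqrt(a\<^sup>2-g\<^sup>2)/2) \<or> z = - \<i> * of_real (g * sqrt(a\<^sup>2-g\<^sup>2)/2)"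
    | "a < g" "z = of_real (g * sqrt(g\<^sup>2-a\<^sup>2)/2) \<or> z = - of_real (g * sqrt(g\<^sup>2-a\<^sup>2)/2)"
    by blast
  then show ?L
  proof cases
    assume "z = 0"
    moreover have "csqrt (of_real (a\<^sup>2/4)) = of_real (a/2)"
      by (rule csqrt_unique) (use a in \<open>auto simp: power_divide\<close>)
    ultimately have "p = of_real (a/2)" "q = of_real (a/2)" unfolding p_def q_def by auto
    then have "p + q = of_real a" by (simp add: complex_eq_iff)
    then show ?L by simp
  next
    assume g0: "0 < g" and ga: "g < a" and ag: "a\<^sup>2 \<le> 2*g\<^sup>2"
    define r where "r = sqrt (a\<^sup>2 - g\<^sup>2)"
    have "g^2 < a^2" using g0 ga by (simp add: power_strict_mono)
    then have rr: "r^2 = a\<^sup>2 - g\<^sup>2" unfolding r_def by simp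
    have r0: "r \<ge> 0" unfolding r_def using \<open>g^2 < a^2\<close> by simp
    have "a\<^sup>2 - g\<^sup>2 \<le> g\<^sup>2" using ag by simp
    then have "sqrt (a\<^sup>2 - g\<^sup>2) \<le> sqrt (g\<^sup>2)" by (rule real_sqrt_le_mono)
    then have gr: "g \<ge> r" unfolding r_def using g0 by simp
    have k1: "csqrt (of_real (a\<^sup>2/4) + \<i> * (\<i> * of_real (g * r/2))) = of_real ((g - r)/2)"
      "csqrt (of_real (a\<^sup>2/4) - \<i> * (\<i> * of_real (g * r/2))) = of_real ((g + r)/2)"
    proof -
      have rr': "r*r = a*a - g*g" using rr by (simp add: power2_eq_square)
      show "csqrt (of_real (a\<^sup>2/4) + \<i> * (\<i> * of_real (g * r/2))) = of_real ((g - r)/2)"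
        by (rule csqrt_unique) (use gr rr' in \<open>auto simp: complex_eq_iff power2_eq_square field_simps\<close>)
      show "csqrt (of_real (a\<^sup>2/4) - \<i> * (\<i> * of_real (g * r/2))) = of_real ((g + r)/2)"
        by (rule csqrt_unique) (use gr r0 rr' in \<open>auto simp: complex_eq_iff power2_eq_square field_simps\<close>)
    qed
    have k2: "csqrt (of_real (a\<^sup>2/4) + \<i> * (- \<i> * of_real (g * r/2))) = of_real ((g + r)/2)"
      "csqrt (of_real (a\<^sup>2/4) - \<i> * (- \<i> * of_real (g * r/2))) = of_real ((g - r)/2)"
    proof -
      have rr': "r*r = a*a - g*g" using rr by (simp add: power2_eq_square)
      show "csqrt (of_real (a\<^sup>2/4) + \<i> * (- \<i> * of_real (g * r/2))) = of_real ((g + r)/2)"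
        by (rule csqrt_unique) (use gr r0 rr' in \<open>auto simp: complex_eq_iff power2_eq_square field_simps\<close>)
      show "csqrt (of_real (a\<^sup>2/4) - \<i> * (- \<i> * of_real (g * r/2))) = of_real ((g - r)/2)"
        by (rule csqrt_unique) (use gr rr' in \<open>auto simp: complex_eq_iff power2_eq_square field_simps\<close>)
    qed
    assume "z = \<i> * of_real (g * sqrt(a\<^sup>2-g\<^sup>2)/2) \<or> z = - \<i> * of_real (g * sqrt(a\<^sup>2-g\<^sup>2)/2)"
    then have "z = \<i> * of_real (g * r/2) \<or> z = - \<i> * of_real (g * r/2)" unfolding r_def .
    then have "p + q = of_real g"
    proof
      assume z: "z = \<i> * of_real (g * r/2)"
      have "p = of_real ((g - r)/2)" "q = of_real ((g + r)/2)"
        by (simp_all only: p_def q_def z k1)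
      then show ?thesis by (simp add: complex_eq_iff)
    next
      assume z: "z = - \<i> * of_real (g * r/2)"
      have "p = of_real ((g + r)/2)" "q = of_real ((g - r)/2)"
        by (simp_all only: p_def q_def z k2)
      then show ?thesis by (simp add: complex_eq_iff)
    qed
    then show ?L by simp
  next
    assume ga: "a < g"
    define h where "h = sqrt (g\<^sup>2 - a\<^sup>2)"
    have "a^2 < g^2" using a ga by (simp add: power_strict_mono)
    then have hh: "h^2 = g\<^sup>2 - a\<^sup>2" unfolding h_def by simp
    have k1: "csqrt (of_real (a\<^sup>2/4) + \<i> * of_real (g * h/2)) = (of_real g + \<i> * of_real h)/2"
      "csqrt (of_real (a\<^sup>2/4) - \<i> * of_real (g * h/2)) = (of_real g - \<i> * of_real h)/2"
      "csqrt (of_real (a\<^sup>2/4) + \<i> * (- of_real (g * h/2))) = (of_real g - \<i> * of_real h)/2"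
      "csqrt (of_real (a\<^sup>2/4) - \<i> * (- of_real (g * h/2))) = (of_real g + \<i> * of_real h)/2"
    proof -
      have hh': "h*h = g*g - a*a" using hh by (simp add: power2_eq_square)
      show "csqrt (of_real (a\<^sup>2/4) + \<i> * of_real (g * h/2)) = (of_real g + \<i> * of_real h)/2"
        by (rule csqrt_unique) (use ga a hh' in \<open>auto simp: complex_eq_iff power2_eq_square field_simps\<close>)
      show "csqrt (of_real (a\<^sup>2/4) - \<i> * of_real (g * h/2)) = (of_real g - \<i> * of_real h)/2"
        by (rule csqrt_unique) (use ga a hh' in \<open>auto simp: complex_eq_iff power2_eq_square field_simps\<close>)
      show "csqrt (of_real (a\<^sup>2/4) + \<i> * (- of_real (g * h/2))) = (of_real g - \<i> * of_real h)/2"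
        by (rule csqrt_unique) (use ga a hh' in \<open>auto simp: complex_eq_iff power2_eq_square field_simps\<close>)
      show "csqrt (of_real (a\<^sup>2/4) - \<i> * (- of_real (g * h/2))) = (of_real g + \<i> * of_real h)/2"
        by (rule csqrt_unique) (use ga a hh' in \<open>auto simp: complex_eq_iff power2_eq_square field_simps\<close>)
    qed
    assume "z = of_real (g * sqrt(g\<^sup>2-a\<^sup>2)/2) \<or> z = - of_real (g * sqrt(g\<^sup>2-a\<^sup>2)/2)"
    then have "z = of_real (g * h/2) \<or> z = - of_real (g * h/2)" unfolding h_def .
    then have "p + q = of_real g"
    proof
      assume z: "z = of_real (g * h/2)"
      have "p = (of_real g + \<i> * of_real h)/2" "q = (of_real g - \<i> * of_real h)/2"
        by (simp_all only: p_def q_def z k1)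
      then show ?thesis by (simp add: complex_eq_iff)
    next
      assume z: "z = - of_real (g * h/2)"
      have "p = (of_real g - \<i> * of_real h)/2" "q = (of_real g + \<i> * of_real h)/2"
        by (simp_all only: p_def q_def z k1)
      then show ?thesis by (simp add: complex_eq_iff)
    qed
    then show ?L by simp
  qed
qed



lemma key_identity:
  fixes p q A w :: complex
  assumes hp: "4*p^2 = A^2 + 4*\<i>*w" and hq: "4*q^2 = A^2 - 4*\<i>*w"
  shows "(p+q-A)*(4*p*q+A^2)*(p+q+A) = 8*w^2"
proof -
  have ii: "\<i>*\<i> = (-1::complex)" by simp
  show ?thesis using hp hq ii by algebra
qed

lemma zorder_core:
  fixes a g :: real
  assumes a: "a > 0"
  defines "p \<equiv> \<lambda>z. csqrt (of_real (a\<^sup>2/4) + \<i>*z)" and "q \<equiv> \<lambda>z. csqrt (of_real (a\<^sup>2/4) - \<i>*z)"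
  defines "f \<equiv> \<lambda>z. 2 * (p z + q z - of_real a) * (p z + q z - of_real g)"
  shows "zorder f 0 = (if g = a then 4 else 2)"
proof -
  define B where "B = ball (0::complex) (a\<^sup>2/4)"
  have ok1: "of_real (a\<^sup>2/4) + \<i>*z \<notin> \<real>\<^sub>\<le>\<^sub>0" "of_real (a\<^sup>2/4) - \<i>*z \<notin> \<real>\<^sub>\<le>\<^sub>0" if "z \<in> B" for z
  proof -
    have "\<bar>Im z\<bar> < a\<^sup>2/4" using that abs_Im_le_cmod[of z] unfolding B_def by simp
    then show "of_real (a\<^sup>2/4) + \<i>*z \<notin> \<real>\<^sub>\<le>\<^sub>0" "of_real (a\<^sup>2/4) - \<i>*z \<notin> \<real>\<^sub>\<le>\<^sub>0"
      by (auto simp: complex_nonpos_Reals_iff)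
  qed
  have hol_p: "p holomorphic_on B" unfolding p_def
    by (intro holomorphic_intros ok1) auto
  have hol_q: "q holomorphic_on B" unfolding q_def
    by (intro holomorphic_intros ok1) auto
  define den where "den = (\<lambda>z. (4 * p z * q z + of_real a ^ 2) * (p z + q z + of_real a))"
  have hol_d1: "(\<lambda>z. 4 * p z * q z + of_real a ^ 2) holomorphic_on B"
    by (intro holomorphic_intros hol_p hol_q)
  define S where "S = B \<inter> (\<lambda>z. 4 * p z * q z + of_real a ^ 2) -` (-{0})"
  have openS: "open S" unfolding S_def
    by (rule continuous_open_preimage[OF holomorphic_on_imp_continuous_on[OF hol_d1]]) (auto simp: B_def)
  have c0: "csqrt (of_real (a\<^sup>2/4)) = of_real (a/2)"
    by (rule csqrt_unique) (use a in \<open>auto simp: power_divide\<close>)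
  have p0: "p 0 = of_real (a/2)" "q 0 = of_real (a/2)"
    by (simp_all only: p_def q_def mult_zero_right add_0_right diff_0_right c0)
  have "4 * p 0 * q 0 + of_real a ^ 2 = of_real (2*a^2)" unfolding p0 by (simp add: power2_eq_square)
  then have "0 \<in> S" unfolding S_def B_def using a by simp
  have ppos: "p z + q z + of_real a \<noteq> 0" for z
  proof -
    have "Re (p z) \<ge> 0" "Re (q z) \<ge> 0" unfolding p_def q_def by (rule Re_csqrt)+
    then have "Re (p z + q z + of_real a) > 0" using a by simp
    then show ?thesis by (metis zero_complex.simps(1) less_irrefl)
  qed
  have den_nz: "den z \<noteq> 0" if "z \<in> S" for z
    using that ppos unfolding den_def S_def by auto
  have hol_den: "den holomorphic_on S" unfolding den_def
    by (rule holomorphic_on_subset[of _ B]) (auto simp: S_def intro!: holomorphic_intros hol_p hol_q)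
  have hol_pq: "(\<lambda>z. p z + q z - of_real g) holomorphic_on S"
    by (rule holomorphic_on_subset[of _ B]) (auto simp: S_def intro!: holomorphic_intros hol_p hol_q)
  have ident: "p z + q z - of_real a = 8 * z^2 / den z" if "z \<in> S" for z
  proof -
    have "4 * (p z)^2 = (of_real a)^2 + 4*\<i>*z" unfolding p_def by (simp add: power_divide)
    moreover have "4 * (q z)^2 = (of_real a)^2 - 4*\<i>*z" unfolding q_def by (simp add: power_divide)
    ultimately have "(p z + q z - of_real a) * den z = 8 * z^2"
      unfolding den_def using key_identity by (simp add: mult.assoc mult.left_commute)
    then show ?thesis using den_nz[OF that] by (simp add: field_simps)
  qed
  show ?thesis
  proof (cases "g = a")
    case False
    define h where "h = (\<lambda>z. 16 * (p z + q z - of_real g) / den z)"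
    have "zorder f 0 = 2"
    proof (rule zorder_eqI[OF openS \<open>0 \<in> S\<close>])
      show "h holomorphic_on S" unfolding h_def
        by (intro holomorphic_intros hol_pq hol_den den_nz)
      have "p 0 + q 0 - of_real g = of_real (a - g)" unfolding p0 by (simp add: complex_eq_iff)
      then show "h 0 \<noteq> 0" unfolding h_def using False den_nz[OF \<open>0 \<in> S\<close>]
        by simp
      fix w assume "w \<in> S" "w \<noteq> 0"
      show "f w = h w * (w - 0) powi 2" unfolding f_def h_def using ident[OF \<open>w \<in> S\<close>]
        by (simp add: field_simps)
    qed
    then show ?thesis using False by simp
  next
    case True
    define h where "h = (\<lambda>z. 128 / (den z)^2)"
    have "zorder f 0 = 4"
    proof (rule zorder_eqI[OF openS \<open>0 \<in> S\<close>])
      show "h holomorphic_on S" unfolding h_def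
        by (intro holomorphic_intros hol_den) (use den_nz in auto)
      show "h 0 \<noteq> 0" unfolding h_def using den_nz[OF \<open>0 \<in> S\<close>]
        by simp
      fix w assume "w \<in> S" "w \<noteq> 0"
      show "f w = h w * (w - 0) powi 4" unfolding f_def h_def using ident[OF \<open>w \<in> S\<close>] True
        by (simp add: field_simps power2_eq_square power4_eq_xxxx)
    qed
    then show ?thesis using True by simp
  qed
qed


lemma reg_imag:
  assumes a: "a > 0" and s0: "0 \<le> s" and s1: "s \<le> a\<^sup>2/4"
  shows "\<i> * complex_of_real s \<in> Dregion a \<and> - \<i> * complex_of_real s \<in> Dregion a"
proof (cases "s = a\<^sup>2/4")
  case True
  have w: "omg a = a\<^sup>2/4" unfolding omg_def by simp
  then have e: "s = omg a" using True by simp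
  have "\<i> * complex_of_real (omg a) \<in> Dregion a" "- \<i> * complex_of_real (omg a) \<in> Dregion a"
    unfolding Dregion_def by blast+
  then show ?thesis unfolding e[symmetric] by blast
next
  case False
  have w: "omg a = a\<^sup>2/4" unfolding omg_def by simp
  have wpos: "a\<^sup>2/4 > 0" using a by simp
  have sl: "s < a\<^sup>2/4" using s1 False by simp
  have "\<i> * complex_of_real s \<notin> Cplus (omg a) \<union> Cminus (omg a)"
    "- \<i> * complex_of_real s \<notin> Cplus (omg a) \<union> Cminus (omg a)"
    unfolding Cplus_def Cminus_def w using sl s0 wpos by (auto simp: complex_eq_iff)
  then show ?thesis unfolding Dregion_def by auto
qed

lemma reg_real:
  assumes a: "a > 0" and x: "x \<noteq> 0"
  shows "complex_of_real x \<in> Dregion a"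
proof -
  have "complex_of_real x \<notin> Cplus (omg a) \<union> Cminus (omg a)"
    unfolding Cplus_def Cminus_def using x by (auto simp: complex_eq_iff)
  then show ?thesis unfolding Dregion_def by auto
qed

lemma Dzero_iff:
  assumes a: "a > 0"
  shows "Ddet a a' C z = 0 \<longleftrightarrow>
     z = 0 \<or> (0 < a' * C\<^sup>2 \<and> a' * C\<^sup>2 < a \<and> a\<^sup>2 \<le> 2*(a' * C\<^sup>2)\<^sup>2 \<and>
        (z = \<i> * of_real ((a' * C\<^sup>2) * sqrt(a\<^sup>2-(a' * C\<^sup>2)\<^sup>2)/2) \<or> z = - \<i> * of_real ((a' * C\<^sup>2) * sqrt(a\<^sup>2-(a' * C\<^sup>2)\<^sup>2)/2)))
     \<or> (a < a' * C\<^sup>2 \<and> (z = of_real ((a' * C\<^sup>2) * sqrt((a' * C\<^sup>2)\<^sup>2-a\<^sup>2)/2) \<or> z = - of_real ((a' * C\<^sup>2) * sqrt((a' * C\<^sup>2)\<^sup>2-a\<^sup>2)/2)))"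
proof -
  have "Ddet a a' C z = 0 \<longleftrightarrow> (csqrt (of_real (a\<^sup>2/4) + \<i>*z) + csqrt (of_real (a\<^sup>2/4) - \<i>*z) - of_real a)
     * (csqrt (of_real (a\<^sup>2/4) + \<i>*z) + csqrt (of_real (a\<^sup>2/4) - \<i>*z) - of_real (a' * C\<^sup>2)) = 0"
  proof -
    have "Ddet a a' C z = 2 * ((csqrt (of_real (a\<^sup>2/4) + \<i>*z) + csqrt (of_real (a\<^sup>2/4) - \<i>*z) - of_real a)
     * (csqrt (of_real (a\<^sup>2/4) + \<i>*z) + csqrt (of_real (a\<^sup>2/4) - \<i>*z) - of_real (a' * C\<^sup>2)))"
      by (simp only: Dform mult.assoc)
    then show ?thesis by (metis mult_eq_0_iff zero_neq_numeral)
  qed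
  from this core_zero[OF a, where g="a' * C\<^sup>2" and z=z] show ?thesis by (rule trans)
qed

lemma Dzorder:
  assumes a: "a > 0"
  shows "zorder (Ddet a a' C) 0 = (if a' * C\<^sup>2 = a then 4 else 2)"
proof -
  have "Ddet a a' C = (\<lambda>z. 2 * ((\<lambda>z. csqrt (of_real (a\<^sup>2/4) + \<i>*z)) z + (\<lambda>z. csqrt (of_real (a\<^sup>2/4) - \<i>*z)) z - of_real a)
     * ((\<lambda>z. csqrt (of_real (a\<^sup>2/4) + \<i>*z)) z + (\<lambda>z. csqrt (of_real (a\<^sup>2/4) - \<i>*z)) z - of_real (a' * C\<^sup>2)))"
    by (rule ext) (simp only: Dform)
  then show ?thesis using zorder_core[OF a, of "a' * C\<^sup>2"] by simp
qed

theorem theoremA5: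
  fixes a C a' :: real
  assumes "a > 0" and "C > 0"
  shows
   "(a' < a / (sqrt 2 * C\<^sup>2) \<longrightarrow>
       Dzeros a a' C = {0} \<and> zorder (Ddet a a' C) 0 = 2)
  \<and> (a / (sqrt 2 * C\<^sup>2) \<le> a' \<and> a' < a / C\<^sup>2 \<longrightarrow>
       Dzeros a a' C = {0, \<i> * complex_of_real (cmod (lambda2 a a' C)),
                           - \<i> * complex_of_real (cmod (lambda2 a a' C))}
       \<and> zorder (Ddet a a' C) 0 = 2)
  \<and> (a' = a / C\<^sup>2 \<longrightarrow>
       Dzeros a a' C = {0} \<and> zorder (Ddet a a' C) 0 = 4)
  \<and> (a / C\<^sup>2 < a' \<longrightarrow>
       Dzeros a a' C = {0, complex_of_real (cmod (lambda2 a a' C)),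
                           - complex_of_real (cmod (lambda2 a a' C))}
       \<and> zorder (Ddet a a' C) 0 = 2
       \<and> (\<exists>x::real. x > 0 \<and> complex_of_real x \<in> Dzeros a a' C))"
proof -
  define g where "g = a' * C\<^sup>2"
  have a: "a > 0" and C: "C > 0" using assms by auto
  have C2: "C\<^sup>2 > 0" using C by simp
  have s2: "sqrt 2 > 0" by simp
  have zo: "zorder (Ddet a a' C) 0 = (if g = a then 4 else 2)" using Dzorder[OF a] unfolding g_def .
  have zi: "\<And>z. Ddet a a' C z = 0 \<longleftrightarrow>
     z = 0 \<or> (0 < g \<and> g < a \<and> a\<^sup>2 \<le> 2*g\<^sup>2 \<and>
        (z = \<i> * of_real (g * sqrt(a\<^sup>2-g\<^sup>2)/2) \<or> z = - \<i> * of_real (g * sqrt(a\<^sup>2-g\<^sup>2)/2)))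
     \<or> (a < g \<and> (z = of_real (g * sqrt(g\<^sup>2-a\<^sup>2)/2) \<or> z = - of_real (g * sqrt(g\<^sup>2-a\<^sup>2)/2)))"
    using Dzero_iff[OF a] unfolding g_def .
  have lam: "lambda2 a a' C = \<i> * complex_of_real (g / 2) * csqrt (complex_of_real (a\<^sup>2 - g\<^sup>2))"
    unfolding lambda2_def g_def omg_def Let_def by simp
  have reg0: "0 \<in> Dregion a" using reg_imag[OF a, of 0] a by simp
  show ?thesis
  proof (intro conjI impI)
    assume h: "a' < a / (sqrt 2 * C\<^sup>2)"
    then have "g * sqrt 2 < a" unfolding g_def using C2 s2 by (simp add: field_simps)
    then have ng: "\<not> (0 < g \<and> a\<^sup>2 \<le> 2*g\<^sup>2)"
    proof (intro notI, elim conjE)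
      assume "g * sqrt 2 < a" "0 < g" "a\<^sup>2 \<le> 2*g\<^sup>2"
      then have "sqrt (a\<^sup>2) \<le> sqrt (2*g\<^sup>2)" by (simp only: real_sqrt_le_iff)
      then have "a \<le> sqrt 2 * g" using a \<open>0 < g\<close> by (simp add: real_sqrt_mult)
      then show False using \<open>g * sqrt 2 < a\<close> by (simp add: mult.commute)
    qed
    have "g < a"
    proof (cases "g \<le> 0")
      case True then show ?thesis using a by simp
    next
      case False
      then have "g * 1 < g * sqrt 2" by (intro mult_strict_left_mono) simp_all
      then show ?thesis using \<open>g * sqrt 2 < a\<close> by simp
    qed
    then have "\<And>z. Ddet a a' C z = 0 \<longleftrightarrow> z = 0" using zi ng by auto
    then show "Dzeros a a' C = {0}" unfolding Dzeros_def using reg0 by auto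
    show "zorder (Ddet a a' C) 0 = 2" using zo \<open>g < a\<close> by simp
  next
    assume h: "a / (sqrt 2 * C\<^sup>2) \<le> a' \<and> a' < a / C\<^sup>2"
    then have h1: "a \<le> g * sqrt 2" and h2: "g < a" unfolding g_def using C2 s2
      by (simp_all add: field_simps)
    have gpos: "g > 0"
    proof (rule ccontr)
      assume "\<not> g > 0"
      then have "g * sqrt 2 \<le> 0" using s2 by (simp add: mult_nonpos_nonneg)
      then show False using h1 a by simp
    qed
    have "a\<^sup>2 \<le> (g * sqrt 2)\<^sup>2" using h1 a by (simp add: power_mono)
    then have ag: "a\<^sup>2 \<le> 2*g\<^sup>2" by (simp add: power_mult_distrib)
    define r where "r = sqrt (a\<^sup>2 - g\<^sup>2)"
    have "g^2 < a^2" using gpos h2 by (simp add: power_strict_mono)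
    then have rr: "r^2 = a\<^sup>2 - g\<^sup>2" and r0: "r \<ge> 0" unfolding r_def by simp_all
    have "csqrt (complex_of_real (a\<^sup>2 - g\<^sup>2)) = of_real r" unfolding r_def
      using \<open>g^2 < a^2\<close> by (simp add: csqrt_of_real)
    then have cm: "cmod (lambda2 a a' C) = g * r / 2" unfolding lam
      using gpos r0 by (simp add: norm_mult)
    have "(g - r)^2 \<ge> 0" by simp
    then have "2 * g * r \<le> a\<^sup>2" using rr by (simp add: power2_eq_square algebra_simps)
    then have sle: "g * r / 2 \<le> a\<^sup>2/4" by simp
    have sge: "0 \<le> g * r / 2" using gpos r0 by simp
    have zz: "\<And>z. Ddet a a' C z = 0 \<longleftrightarrow> z = 0 \<or> z = \<i> * of_real (g * r/2) \<or> z = - \<i> * of_real (g * r/2)"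
      unfolding r_def using zi gpos h2 ag by simp
    have reg: "\<i> * complex_of_real (g * r / 2) \<in> Dregion a" "- \<i> * complex_of_real (g * r / 2) \<in> Dregion a"
      using reg_imag[OF a sge sle] by auto
    show "Dzeros a a' C = {0, \<i> * complex_of_real (cmod (lambda2 a a' C)),
                           - \<i> * complex_of_real (cmod (lambda2 a a' C))}"
      unfolding Dzeros_def cm
    proof (rule set_eqI)
      fix z
      show "z \<in> {z \<in> Dregion a. Ddet a a' C z = 0} \<longleftrightarrow> z \<in> {0, \<i> * complex_of_real (g * r / 2), - \<i> * complex_of_real (g * r / 2)}"
        using zz[of z] reg reg0 by blast
    qed
    show "zorder (Ddet a a' C) 0 = 2" using zo h2 by simp
  next
    assume h: "a' = a / C\<^sup>2"
    then have ga: "g = a" unfolding g_def using C2 by simp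
    then have zz: "\<And>z. Ddet a a' C z = 0 \<longleftrightarrow> z = 0" using zi by simp
    show "Dzeros a a' C = {0}" unfolding Dzeros_def using reg0 zz by blast
    show "zorder (Ddet a a' C) 0 = 4" using zo ga by simp
  next
    assume h: "a / C\<^sup>2 < a'"
    then have ga: "a < g" unfolding g_def using C2 by (simp add: field_simps)
    define hh where "hh = sqrt (g\<^sup>2 - a\<^sup>2)"
    have "a^2 < g^2" using a ga by (simp add: power_strict_mono)
    then have hpos: "hh > 0" unfolding hh_def by simp
    have gpos: "g > 0" using a ga by simp
    have "csqrt (complex_of_real (a\<^sup>2 - g\<^sup>2)) = \<i> * of_real hh" unfolding hh_def
      using \<open>a^2 < g^2\<close> by (simp add: csqrt_of_real_nonpos)
    then have cm: "cmod (lambda2 a a' C) = g * hh / 2" unfolding lam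
      using gpos hpos by (simp add: norm_mult)
    have zz: "\<And>z. Ddet a a' C z = 0 \<longleftrightarrow> z = 0 \<or> z = of_real (g * hh/2) \<or> z = - of_real (g * hh/2)"
      unfolding hh_def using zi ga by simp
    have xpos: "g * hh / 2 > 0" using gpos hpos by simp
    have reg: "complex_of_real (g * hh / 2) \<in> Dregion a" "- complex_of_real (g * hh / 2) \<in> Dregion a"
    proof -
      have ne: "g * hh / 2 \<noteq> 0" "- (g * hh / 2) \<noteq> 0" using gpos hpos by simp_all
      show "complex_of_real (g * hh / 2) \<in> Dregion a" by (rule reg_real[OF a ne(1)])
      have "complex_of_real (- (g * hh / 2)) \<in> Dregion a" by (rule reg_real[OF a ne(2)])
      then show "- complex_of_real (g * hh / 2) \<in> Dregion a" by (simp only: of_real_minus)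
    qed
    show "Dzeros a a' C = {0, complex_of_real (cmod (lambda2 a a' C)),
                           - complex_of_real (cmod (lambda2 a a' C))}"
      unfolding Dzeros_def cm
    proof (rule set_eqI)
      fix z
      show "z \<in> {z \<in> Dregion a. Ddet a a' C z = 0} \<longleftrightarrow> z \<in> {0, complex_of_real (g * hh / 2), - complex_of_real (g * hh / 2)}"
        using zz[of z] reg reg0 by blast
    qed
    show "zorder (Ddet a a' C) 0 = 2" using zo ga by simp
    show "\<exists>x::real. x > 0 \<and> complex_of_real x \<in> Dzeros a a' C"
    proof (intro exI conjI)
      show "g * hh / 2 > 0" by (rule xpos)
      show "complex_of_real (g * hh / 2) \<in> Dzeros a a' C"
        unfolding Dzeros_def using reg(1) zz[of "complex_of_real (g * hh / 2)"] by blast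
    qed
  qed
qed

end
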